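(* Let $N\ge2$, $f\in L^2(\mathbb T^N)$, and for $n\ge1$ let $$f_n(t_1,t_2,\dots,t_N)=\sum_{k=-n}^{n}t_1^k\,C_{1k}\{f\}(t_2,\dots,t_N),$$ where $C_{1k}\{f\}(t_2,\dots,t_N)=\frac1{2\pi}\int_{\mathbb T}f(t_1,t_2,\dots,t_N)t_1^{-k}\,|dt_1|$. Then $f_n\rightarrowtail f$ in $L^2(\mathbb T^N)$.
   Context: $\mathbb T$ is the unit circle. A sequence $f_n\in L^2(\mathbb T^N)$ converges to $f\in L^p(\mathbb T^N)$ ($p\ge1$) "restricted to hyperplanes", written $f_n\rightarrowtail f$ in $L^p(\mathbb T^N)$, if $f_n\to f$ in $L^p(\mathbb T^N)$ and, for each $l=2,3,\dots,N$ and a.e. $(t_l,\dots,t_N)\in\mathbb T^{N-l+1}$, $f_n(\cdot,t_l,\dots,t_N)\to f(\cdot,t_l,\dots,t_N)$ in $L^p(\mathbb T^{l-1})$ as functions of $(t_1,\dots,t_{l-1})$. *)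

theory Defs
  imports "HOL-Analysis.Analysis"
begin

text \<open>Arc-length measure |dt| on the unit circle T, as the image of Lebesgue
measure on [0, 2 pi) under theta maps to cis theta.\<close>
definition circle_measure :: "complex measure" where
  "circle_measure = distr (restrict_space lborel {0..<2*pi})
                          (restrict_space borel (sphere 0 1)) cis"

definition torus_on :: "nat set \<Rightarrow> (nat \<Rightarrow> complex) measure" where
  "torus_on I = PiM I (\<lambda>_. circle_measure)"

definition torus :: "nat \<Rightarrow> (nat \<Rightarrow> complex) measure" where
  "torus N = torus_on {1..N}"

definition Lp_mem :: "real \<Rightarrow> 'a measure \<Rightarrow> ('a \<Rightarrow> complex) \<Rightarrow> bool" where
  "Lp_mem p M g \<longleftrightarrow> g \<in> borel_measurable M \<and>
     (\<integral>\<^sup>+ x. ennreal (norm (g x) powr p) \<partial>M) < \<infinity>"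

definition Lp_conv :: "real \<Rightarrow> 'a measure \<Rightarrow> (nat \<Rightarrow> 'a \<Rightarrow> complex) \<Rightarrow> ('a \<Rightarrow> complex) \<Rightarrow> bool" where
  "Lp_conv p M fs g \<longleftrightarrow>
     ((\<lambda>n. \<integral>\<^sup>+ x. ennreal (norm (fs n x - g x) powr p) \<partial>M) \<longlonglongrightarrow> 0)"

text \<open>Convergence restricted to hyperplanes: f_n \<rightarrowtail> f in L^p(T^N).\<close>
definition rconv :: "real \<Rightarrow> nat \<Rightarrow> (nat \<Rightarrow> (nat \<Rightarrow> complex) \<Rightarrow> complex)
                      \<Rightarrow> ((nat \<Rightarrow> complex) \<Rightarrow> complex) \<Rightarrow> bool" where
  "rconv p N fs f \<longleftrightarrow>
     (\<forall>n. Lp_mem 2 (torus N) (fs n)) \<and> Lp_mem p (torus N) f \<and>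
     Lp_conv p (torus N) fs f \<and>
     (\<forall>l\<in>{2..N}. AE y in torus_on {l..N}.
        Lp_conv p (torus_on {1..<l})
          (\<lambda>n x. fs n (merge {1..<l} {l..N} (x, y)))
          (\<lambda>x. f (merge {1..<l} {l..N} (x, y))))"

definition C1 :: "int \<Rightarrow> ((nat \<Rightarrow> complex) \<Rightarrow> complex) \<Rightarrow> (nat \<Rightarrow> complex) \<Rightarrow> complex" where
  "C1 k f t = complex_of_real (1 / (2*pi)) *
     (\<integral> s. f (t(1 := s)) * s powi (-k) \<partial>circle_measure)"

end

theory Submission
  imports Defs
begin


abbreviation "Sph \<equiv> sphere (0::complex) 1"

lemma space_C[simp]: "space circle_measure = Sph"
  unfolding circle_measure_def by (simp add: space_restrict_space)

lemma sets_C: "sets circle_measure = sets (restrict_space borel Sph)"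
  unfolding circle_measure_def by simp

lemma cis_cont: "continuous_on UNIV cis"
  by (rule continuous_on_cis[OF continuous_on_id])

lemma cis_meas2: "cis \<in> measurable borel (restrict_space borel Sph)"
proof (rule measurable_restrict_space2)
  show "cis \<in> space borel \<rightarrow> Sph" by auto
  show "cis \<in> borel_measurable borel" by (rule borel_measurable_continuous_onI[OF cis_cont])
qed

lemma cis_meas: "cis \<in> measurable (restrict_space lborel {0..<2*pi}) (restrict_space borel Sph)"
  by (rule measurable_restrict_space1) (simp add: cis_meas2)

lemma emeasure_C: "emeasure circle_measure Sph = 2*pi"
proof -
  have "emeasure circle_measure Sph = emeasure (restrict_space lborel {0..<2*pi}) (cis -` Sph \<inter> space (restrict_space lborel {0..<2*pi}))"
  proof -
    have top: "Sph \<in> sets (restrict_space borel Sph)"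
      using sets.top[of "restrict_space borel Sph"] by (simp add: space_restrict_space)
    show ?thesis unfolding circle_measure_def by (rule emeasure_distr[OF cis_meas top])
  qed
  also have "cis -` Sph \<inter> space (restrict_space lborel {0..<2*pi}) = {0..<2*pi}"
    by (auto simp: space_restrict_space)
  also have "emeasure (restrict_space lborel {0..<2*pi}) {0..<2*pi} = 2*pi"
  proof -
    have "emeasure (restrict_space lborel {0..<2*pi}) {0..<2*pi} = emeasure lborel {0..<2*pi}"
      by (rule emeasure_restrict_space) auto
    also have "\<dots> = ennreal (2*pi)" by simp
    finally show ?thesis .
  qed
  finally show ?thesis .
qed

interpretation C: finite_measure circle_measure
  by (rule finite_measureI) (simp add: emeasure_C)

lemma measure_C: "measure circle_measure Sph = 2*pi"
  using emeasure_C by (simp add: measure_def)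

lemma meas_C_eq: "measurable circle_measure N = measurable (restrict_space borel Sph) N"
  by (rule measurable_cong_sets[OF sets_C refl])

lemma cont_meas_C: "continuous_on Sph g \<Longrightarrow> g \<in> borel_measurable circle_measure"
  unfolding meas_C_eq by (rule borel_measurable_continuous_on_restrict)

lemma powi_meas_C[measurable]: "(\<lambda>s. s powi m) \<in> borel_measurable circle_measure"
proof (rule cont_meas_C)
  show "continuous_on Sph (\<lambda>s. s powi m)"
    by (rule continuous_on_power_int[OF continuous_on_id]) auto
qed


lemma integral_C:
  fixes g :: "complex \<Rightarrow> complex"
  assumes "g \<in> borel_measurable circle_measure"
  shows "integral\<^sup>L circle_measure g = integral\<^sup>L lborel (\<lambda>x. indicator {0..2*pi} x *\<^sub>R g (cis x))"
proof -
  have gm: "g \<in> borel_measurable (restrict_space borel Sph)"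
    using assms unfolding meas_C_eq .
  have "integral\<^sup>L circle_measure g = integral\<^sup>L (restrict_space lborel {0..<2*pi}) (\<lambda>x. g (cis x))"
    unfolding circle_measure_def by (rule integral_distr[OF cis_meas gm])
  also have "\<dots> = integral\<^sup>L lborel (\<lambda>x. indicator {0..<2*pi} x *\<^sub>R g (cis x))"
    by (rule integral_restrict_space) auto
  also have "\<dots> = integral\<^sup>L lborel (\<lambda>x. indicator {0..2*pi} x *\<^sub>R g (cis x))"
  proof (intro integral_cong_AE)
    have gc: "(\<lambda>x. g (cis x)) \<in> borel_measurable lborel"
      using measurable_compose[OF cis_meas2 gm] by simp
    show "(\<lambda>x. indicat_real {0..<2 * pi} x *\<^sub>R g (cis x)) \<in> borel_measurable lborel"
      using gc by measurable
    show "(\<lambda>x. indicat_real {0..2 * pi} x *\<^sub>R g (cis x)) \<in> borel_measurable lborel"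
      using gc by measurable
    show "AE x in lborel. indicat_real {0..<2 * pi} x *\<^sub>R g (cis x) = indicat_real {0..2 * pi} x *\<^sub>R g (cis x)"
      by (rule eventually_mono[OF AE_lborel_singleton[of "2*pi"]]) (auto simp: indicator_def)
  qed
  finally show ?thesis .
qed

lemma powi_cis_int: "cis x powi m = cis (of_int m * x)"
  by (rule cis_power_int)

lemma integral_C_powi: "integral\<^sup>L circle_measure (\<lambda>s. s powi m) = (if m = 0 then 2*pi else 0)"
proof (cases "m = 0")
  case True
  then show ?thesis using measure_C by (simp add: scaleR_conv_of_real)
next
  case False
  have "integral\<^sup>L circle_measure (\<lambda>s. s powi m) = integral\<^sup>L lborel (\<lambda>x. indicator {0..2*pi} x *\<^sub>R cis (of_int m * x))"
    by (simp only: integral_C[OF powi_meas_C[of m]] cis_power_int)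
  also have "\<dots> = cis (of_int m * (2*pi)) / (\<i> * of_int m) - cis (of_int m * 0) / (\<i> * of_int m)"
  proof (rule integral_FTC_atLeastAtMost)
    fix x :: real
    show "((\<lambda>x. cis (of_int m * x) / (\<i> * of_int m)) has_vector_derivative cis (of_int m * x)) (at x within {0..2*pi})"
      using False
      by (auto intro!: derivative_eq_intros simp: has_vector_derivative_def fun_eq_iff
              scaleR_conv_of_real field_simps simp del: of_int_mult)
  next
    show "0 \<le> 2*pi" by simp
  next
    show "continuous_on {0..2*pi} (\<lambda>x. cis (of_int m * x))"
      by (intro continuous_on_cis continuous_on_mult continuous_on_const continuous_on_id)
  qed
  also have "\<dots> = 0"
  proof -
    have e: "of_int m * (2*pi) = 2 * pi * real_of_int m"
      by (simp only: mult.commute)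
    have "cis (of_int m * (2*pi)) = 1"
      unfolding e by (rule cis_multiple_2pi) simp
    then show ?thesis by simp
  qed
  finally show ?thesis using False by (simp only: if_False of_real_0)
qed



abbreviation "CM \<equiv> circle_measure"

definition L2C :: "(complex \<Rightarrow> complex) \<Rightarrow> bool" where
  "L2C u \<longleftrightarrow> u \<in> borel_measurable CM \<and> integrable CM (\<lambda>s. (cmod (u s))^2)"

definition tp :: "int set \<Rightarrow> (int \<Rightarrow> complex) \<Rightarrow> complex \<Rightarrow> complex" where
  "tp F a s = (\<Sum>k\<in>F. a k * s powi k)"

definition coef :: "(complex \<Rightarrow> complex) \<Rightarrow> int \<Rightarrow> complex" where
  "coef u k = complex_of_real (1 / (2*pi)) * (\<integral> s. u s * s powi (-k) \<partial>CM)"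

definition Sn :: "nat \<Rightarrow> (complex \<Rightarrow> complex) \<Rightarrow> complex \<Rightarrow> complex" where
  "Sn n u s = (\<Sum>k\<in>{-int n..int n}. s powi k * coef u k)"

lemma norm_powi_Sph: "s \<in> Sph \<Longrightarrow> cmod (s powi k) = 1"
  by (simp add: norm_power_int)

lemma tp_meas[measurable]: "tp F a \<in> borel_measurable CM"
  unfolding tp_def[abs_def] by measurable

lemma tp_bound: "s \<in> Sph \<Longrightarrow> cmod (tp F a s) \<le> (\<Sum>k\<in>F. cmod (a k))"
  unfolding tp_def
  by (rule order_trans[OF norm_sum]) (simp add: norm_mult norm_powi_Sph)

lemma Sn_tp: "Sn n u = tp {-int n..int n} (coef u)"
  unfolding Sn_def tp_def by (simp add: fun_eq_iff mult.commute)

lemma L2C_bounded: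
  assumes "u \<in> borel_measurable CM" "\<And>s. s \<in> Sph \<Longrightarrow> cmod (u s) \<le> B"
  shows "L2C u"
  unfolding L2C_def
proof
  show "u \<in> borel_measurable CM" by fact
  show "integrable CM (\<lambda>s. (cmod (u s))\<^sup>2)"
  proof (rule C.integrable_const_bound[where B="B^2"])
    show "AE x in CM. norm ((cmod (u x))\<^sup>2) \<le> B\<^sup>2"
      using assms(2) by (auto intro!: AE_I2 power_mono)
  qed (use assms(1) in measurable)
qed

lemma L2C_tp: "L2C (tp F a)"
  by (rule L2C_bounded[OF tp_meas tp_bound])

lemma le_1_sq: "(t::real) \<le> 1 + t^2"
proof (cases "t \<le> 1")
  case True
  then show ?thesis using zero_le_power2[of t] by linarith
next
  case False
  then have "t * 1 \<le> t * t" by (intro mult_left_mono) auto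
  then show ?thesis by (simp add: power2_eq_square)
qed

lemma sq_sum_le: "((x::real) + y)^2 \<le> 2 * x^2 + 2 * y^2"
  using zero_le_power2[of "x - y"] power2_diff[of x y] power2_sum[of x y] by linarith

lemma L2C_integrable: "L2C u \<Longrightarrow> integrable CM u"
  unfolding L2C_def
proof (elim conjE, rule Bochner_Integration.integrable_bound)
  assume i: "integrable CM (\<lambda>s. (cmod (u s))\<^sup>2)"
  show "integrable CM (\<lambda>s. 1 + (cmod (u s))\<^sup>2)" using i by simp
  show "AE x in CM. norm (u x) \<le> norm (1 + (cmod (u x))\<^sup>2)"
    by (intro AE_I2) (simp add: le_1_sq)
qed

lemma L2C_mult_bounded:
  assumes u: "L2C u" and g: "g \<in> borel_measurable CM" and B: "\<And>s. s \<in> Sph \<Longrightarrow> cmod (g s) \<le> B"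
  shows "integrable CM (\<lambda>s. u s * g s)"
proof -
  have B0: "0 \<le> B" using B[of 1] by (smt (verit) norm_ge_zero mem_sphere_0 norm_one)
  have um: "u \<in> borel_measurable CM" and i: "integrable CM (\<lambda>s. (cmod (u s))\<^sup>2)"
    using u unfolding L2C_def by auto
  show ?thesis
  proof (rule Bochner_Integration.integrable_bound)
    show "integrable CM (\<lambda>s. (1 + (cmod (u s))\<^sup>2) * B)" using i by simp
    show "(\<lambda>s. u s * g s) \<in> borel_measurable CM" using um g by measurable
    show "AE x in CM. norm (u x * g x) \<le> norm ((1 + (cmod (u x))\<^sup>2) * B)"
    proof (intro AE_I2)
      fix x assume x: "x \<in> space CM"
      have "norm (u x * g x) = cmod (u x) * cmod (g x)" by (simp add: norm_mult)
      also have "\<dots> \<le> (1 + (cmod (u x))\<^sup>2) * B"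
        using B[of x] x B0 le_1_sq[of "cmod (u x)"]
        by (intro mult_mono) auto
      also have "\<dots> = norm ((1 + (cmod (u x))\<^sup>2) * B)" using B0 by simp
      finally show "norm (u x * g x) \<le> norm ((1 + (cmod (u x))\<^sup>2) * B)" .
    qed
  qed
qed

lemma sq_add_le: "(cmod (a + b))^2 \<le> 2 * (cmod a)^2 + 2 * (cmod b)^2"
proof -
  have "cmod (a + b) \<le> cmod a + cmod b" by (rule norm_triangle_ineq)
  then have "(cmod (a + b))^2 \<le> (cmod a + cmod b)^2" by (simp add: power_mono)
  also have "\<dots> \<le> 2 * (cmod a)^2 + 2 * (cmod b)^2"
    by (rule sq_sum_le)
  finally show ?thesis .
qed

lemma L2C_add: assumes "L2C u" "L2C v" shows "L2C (\<lambda>s. u s + v s)"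
  unfolding L2C_def
proof
  show "(\<lambda>s. u s + v s) \<in> borel_measurable CM" using assms unfolding L2C_def by (auto intro: borel_measurable_add)
  show "integrable CM (\<lambda>s. (cmod (u s + v s))\<^sup>2)"
  proof (rule Bochner_Integration.integrable_bound)
    show "integrable CM (\<lambda>s. 2 * (cmod (u s))^2 + 2 * (cmod (v s))^2)"
      using assms unfolding L2C_def by auto
    have [measurable]: "u \<in> borel_measurable CM" "v \<in> borel_measurable CM"
      using assms unfolding L2C_def by auto
    show "(\<lambda>s. (cmod (u s + v s))\<^sup>2) \<in> borel_measurable CM" by measurable
    show "AE x in CM. norm ((cmod (u x + v x))\<^sup>2) \<le> norm (2 * (cmod (u x))^2 + 2 * (cmod (v x))^2)"
      by (intro AE_I2) (simp add: sq_add_le)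
  qed
qed

lemma L2C_cmult: assumes "L2C u" shows "L2C (\<lambda>s. c * u s)"
  using assms unfolding L2C_def by (auto simp: norm_mult power_mult_distrib)

lemma L2C_diff: assumes "L2C u" "L2C v" shows "L2C (\<lambda>s. u s - v s)"
  using L2C_add[OF assms(1) L2C_cmult[OF assms(2), of "-1"]] by simp

lemma L2C_Sn: "L2C (Sn n u)"
  unfolding Sn_tp by (rule L2C_tp)

lemma powi_mult_Sph: "s \<in> Sph \<Longrightarrow> s powi j * s powi k = s powi (j + k)"
  by (subst power_int_add) auto

lemma integral_powi_prod: "integral\<^sup>L CM (\<lambda>s. s powi j * s powi (-k)) = (if j = k then 2*pi else 0)"
proof -
  have "integral\<^sup>L CM (\<lambda>s. s powi j * s powi (-k)) = integral\<^sup>L CM (\<lambda>s. s powi (j - k))"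
    by (intro Bochner_Integration.integral_cong refl) (simp add: powi_mult_Sph)
  also have "\<dots> = (if j = k then 2*pi else 0)" by (simp add: integral_C_powi)
  finally show ?thesis .
qed

lemma integrable_powi_prod: "integrable CM (\<lambda>s. s powi j * s powi (-k))"
  by (rule C.integrable_const_bound[where B=1]) (auto intro!: AE_I2 simp: norm_mult norm_powi_Sph)

lemma integrable_u_powi: "L2C u \<Longrightarrow> integrable CM (\<lambda>s. u s * s powi k)"
  by (rule L2C_mult_bounded[where B=1]) (auto simp: norm_powi_Sph)

lemma orth_resid:
  assumes u: "L2C u" and k: "k \<in> {-int n..int n}"
  shows "integral\<^sup>L CM (\<lambda>s. (u s - Sn n u s) * s powi (-k)) = 0"
proof -
  have "integral\<^sup>L CM (\<lambda>s. (u s - Sn n u s) * s powi (-k))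
      = integral\<^sup>L CM (\<lambda>s. u s * s powi (-k)) - integral\<^sup>L CM (\<lambda>s. Sn n u s * s powi (-k))"
    unfolding left_diff_distrib
    by (rule Bochner_Integration.integral_diff[OF integrable_u_powi[OF u] integrable_u_powi[OF L2C_Sn]])
  also have "integral\<^sup>L CM (\<lambda>s. Sn n u s * s powi (-k)) = (\<Sum>j\<in>{-int n..int n}. coef u j * integral\<^sup>L CM (\<lambda>s. s powi j * s powi (-k)))"
  proof -
    have "integral\<^sup>L CM (\<lambda>s. Sn n u s * s powi (-k)) = integral\<^sup>L CM (\<lambda>s. (\<Sum>j\<in>{-int n..int n}. coef u j * (s powi j * s powi (-k))))"
      unfolding Sn_def sum_distrib_right by (intro Bochner_Integration.integral_cong refl sum.cong) (auto simp: ac_simps)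
    also have "\<dots> = (\<Sum>j\<in>{-int n..int n}. integral\<^sup>L CM (\<lambda>s. coef u j * (s powi j * s powi (-k))))"
      by (rule Bochner_Integration.integral_sum) (auto intro: integrable_powi_prod)
    also have "\<dots> = (\<Sum>j\<in>{-int n..int n}. coef u j * integral\<^sup>L CM (\<lambda>s. s powi j * s powi (-k)))"
      by (intro sum.cong refl) simp
    finally show ?thesis .
  qed
  also have "\<dots> = (\<Sum>j\<in>{-int n..int n}. if j = k then coef u k * (2 * pi) else 0)"
    by (intro sum.cong refl) (simp add: integral_powi_prod)
  also have "\<dots> = coef u k * (2 * pi)" using k by (simp add: sum.delta)
  also have "coef u k * (2 * pi) = integral\<^sup>L CM (\<lambda>s. u s * s powi (-k))"
    unfolding coef_def by simp
  finally show ?thesis by simp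
qed



lemma borel_measurable_cnj[measurable]: "cnj \<in> borel_measurable borel"
  by (rule borel_measurable_continuous_onI) (intro continuous_on_cnj continuous_on_id)

lemma cnj_Sph: "s \<in> Sph \<Longrightarrow> cnj s = inverse s"
proof -
  assume s: "s \<in> Sph"
  have "s * cnj s = of_real ((cmod s)^2)" by (rule complex_norm_square[symmetric])
  then have "s * cnj s = 1" using s by simp
  moreover have "s \<noteq> 0" using s by auto
  ultimately show ?thesis by (simp add: field_simps)
qed

lemma cnj_powi_Sph: "s \<in> Sph \<Longrightarrow> cnj s powi k = s powi (-k)"
  by (simp add: cnj_Sph power_int_minus power_int_inverse)

lemma cnj_tp_Sph: "s \<in> Sph \<Longrightarrow> cnj (tp F d s) = (\<Sum>k\<in>F. cnj (d k) * s powi (-k))"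
  unfolding tp_def by (simp add: cnj_powi_Sph)

lemma norm_sq_add: "(cmod (a + b))^2 = (cmod a)^2 + (cmod b)^2 + 2 * Re (a * cnj b)"
  unfolding cmod_power2 by (simp add: power2_eq_square algebra_simps)

lemma pyth_gen:
  assumes r: "L2C r" and F: "finite F" and orth: "\<And>k. k \<in> F \<Longrightarrow> integral\<^sup>L CM (\<lambda>s. r s * s powi (-k)) = 0"
  shows "integral\<^sup>L CM (\<lambda>s. (cmod (r s + tp F d s))^2)
       = integral\<^sup>L CM (\<lambda>s. (cmod (r s))^2) + integral\<^sup>L CM (\<lambda>s. (cmod (tp F d s))^2)"
proof -
  have rm[measurable]: "r \<in> borel_measurable CM" using r unfolding L2C_def by auto
  have ir: "integrable CM (\<lambda>s. (cmod (r s))^2)" using r unfolding L2C_def by auto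
  have iq: "integrable CM (\<lambda>s. (cmod (tp F d s))^2)" using L2C_tp[of F d] unfolding L2C_def by auto
  have irq: "integrable CM (\<lambda>s. r s * cnj (tp F d s))"
  proof (rule L2C_mult_bounded[OF r])
    show "(\<lambda>s. cnj (tp F d s)) \<in> borel_measurable CM" by measurable
    show "cmod (cnj (tp F d s)) \<le> (\<Sum>k\<in>F. cmod (d k))" if "s \<in> Sph" for s
      using tp_bound[OF that] by simp
  qed
  have zero: "integral\<^sup>L CM (\<lambda>s. r s * cnj (tp F d s)) = 0"
  proof -
    have "integral\<^sup>L CM (\<lambda>s. r s * cnj (tp F d s)) = integral\<^sup>L CM (\<lambda>s. \<Sum>k\<in>F. cnj (d k) * (r s * s powi (-k)))"
      by (intro Bochner_Integration.integral_cong refl)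
         (simp add: cnj_tp_Sph sum_distrib_left ac_simps)
    also have "\<dots> = (\<Sum>k\<in>F. integral\<^sup>L CM (\<lambda>s. cnj (d k) * (r s * s powi (-k))))"
      by (rule Bochner_Integration.integral_sum) (auto intro: integrable_u_powi[OF r])
    also have "\<dots> = (\<Sum>k\<in>F. cnj (d k) * integral\<^sup>L CM (\<lambda>s. r s * s powi (-k)))"
      by (intro sum.cong refl) simp
    also have "\<dots> = 0" using orth by simp
    finally show ?thesis .
  qed
  have "integral\<^sup>L CM (\<lambda>s. (cmod (r s + tp F d s))^2)
      = integral\<^sup>L CM (\<lambda>s. (cmod (r s))^2 + (cmod (tp F d s))^2 + 2 * Re (r s * cnj (tp F d s)))"
    by (simp add: norm_sq_add)
  also have "\<dots> = integral\<^sup>L CM (\<lambda>s. (cmod (r s))^2) + integral\<^sup>L CM (\<lambda>s. (cmod (tp F d s))^2)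
       + integral\<^sup>L CM (\<lambda>s. 2 * Re (r s * cnj (tp F d s)))"
  proof -
    have i3: "integrable CM (\<lambda>s. 2 * Re (r s * cnj (tp F d s)))"
      using integrable_Re[OF irq] by (rule integrable_mult_right)
    show ?thesis
      by (subst Bochner_Integration.integral_add[OF Bochner_Integration.integrable_add[OF ir iq] i3],
          subst Bochner_Integration.integral_add[OF ir iq]) (rule refl)
  qed
  also have "integral\<^sup>L CM (\<lambda>s. 2 * Re (r s * cnj (tp F d s))) = 2 * Re (integral\<^sup>L CM (\<lambda>s. r s * cnj (tp F d s)))"
    by (simp only: integral_mult_right_zero integral_bounded_linear[OF bounded_linear_Re irq])
  finally show ?thesis using zero by simp
qed

lemma tp_extend:
  assumes "F \<subseteq> G" "finite G"
  shows "tp F a = tp G (\<lambda>k. if k \<in> F then a k else 0)"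
  unfolding tp_def fun_eq_iff
  using assms by (intro allI sum.mono_neutral_cong_left) auto

lemma tp_diff: "tp G a s - tp G b s = tp G (\<lambda>k. a k - b k) s"
  unfolding tp_def by (simp add: sum_subtractf left_diff_distrib)

lemma best_approx:
  assumes u: "L2C u" and F: "F \<subseteq> {-int n..int n}"
  shows "integral\<^sup>L CM (\<lambda>s. (cmod (u s - Sn n u s))^2) \<le> integral\<^sup>L CM (\<lambda>s. (cmod (u s - tp F a s))^2)"
proof -
  let ?G = "{-int n..int n}"
  let ?a' = "\<lambda>k. if k \<in> F then a k else 0"
  let ?d = "\<lambda>k. coef u k - ?a' k"
  have r: "L2C (\<lambda>s. u s - Sn n u s)" by (rule L2C_diff[OF u L2C_Sn])
  have eq: "u s - tp F a s = (u s - Sn n u s) + tp ?G ?d s" for s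
  proof -
    have e1: "tp F a s = tp ?G ?a' s" using tp_extend[OF F, of a] by simp
    have e2: "tp ?G (coef u) s - tp ?G ?a' s = tp ?G ?d s" by (rule tp_diff)
    show ?thesis unfolding Sn_tp e1 e2[symmetric] by (simp add: algebra_simps)
  qed
  have "integral\<^sup>L CM (\<lambda>s. (cmod (u s - tp F a s))^2)
     = integral\<^sup>L CM (\<lambda>s. (cmod ((u s - Sn n u s) + tp ?G ?d s))^2)"
    by (simp only: eq)
  also have "\<dots> = integral\<^sup>L CM (\<lambda>s. (cmod (u s - Sn n u s))^2) + integral\<^sup>L CM (\<lambda>s. (cmod (tp ?G ?d s))^2)"
    by (rule pyth_gen[OF r]) (auto intro: orth_resid[OF u])
  also have "\<dots> \<ge> integral\<^sup>L CM (\<lambda>s. (cmod (u s - Sn n u s))^2)"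
    by (simp add: integral_nonneg_AE)
  finally show ?thesis .
qed

lemma bessel:
  assumes u: "L2C u"
  shows "integral\<^sup>L CM (\<lambda>s. (cmod (u s - Sn n u s))^2) \<le> integral\<^sup>L CM (\<lambda>s. (cmod (u s))^2)"
  using best_approx[OF u, of "{}" n] by (simp add: tp_def)

definition Dn :: "(complex \<Rightarrow> complex) \<Rightarrow> bool" where
  "Dn u \<longleftrightarrow> (\<forall>e>0. \<exists>F a. finite F \<and> integral\<^sup>L CM (\<lambda>s. (cmod (u s - tp F a s))^2) < e)"

lemma finite_int_bounded:
  assumes "finite (F::int set)"
  obtains N :: nat where "\<And>n. n \<ge> N \<Longrightarrow> F \<subseteq> {-int n..int n}"
proof -
  let ?N = "nat (Max (insert 0 (abs ` F)))"
  have "\<bar>k\<bar> \<le> Max (insert 0 (abs ` F))" if "k \<in> F" for k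
    using assms that by (intro Max_ge) auto
  then have "F \<subseteq> {-int n..int n}" if "n \<ge> ?N" for n
    using that by fastforce
  then show ?thesis using that by blast
qed

lemma conv_of_D:
  assumes u: "L2C u" and D: "Dn u"
  shows "(\<lambda>n. integral\<^sup>L CM (\<lambda>s. (cmod (u s - Sn n u s))^2)) \<longlonglongrightarrow> 0"
proof (rule LIMSEQ_I)
  fix e :: real assume e: "0 < e"
  obtain F a where F: "finite F" and Fa: "integral\<^sup>L CM (\<lambda>s. (cmod (u s - tp F a s))^2) < e"
    using D e unfolding Dn_def by blast
  obtain N where N: "\<And>n. n \<ge> N \<Longrightarrow> F \<subseteq> {-int n..int n}" using finite_int_bounded[OF F] by blast
  have "norm (integral\<^sup>L CM (\<lambda>s. (cmod (u s - Sn n u s))^2) - 0) < e" if "n \<ge> N" for n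
  proof -
    have "0 \<le> integral\<^sup>L CM (\<lambda>s. (cmod (u s - Sn n u s))^2)" by (simp add: integral_nonneg_AE)
    moreover have "integral\<^sup>L CM (\<lambda>s. (cmod (u s - Sn n u s))^2) < e"
      using best_approx[OF u N[OF that], of a] Fa by linarith
    ultimately show ?thesis by simp
  qed
  then show "\<exists>no. \<forall>n\<ge>no. norm (integral\<^sup>L CM (\<lambda>s. (cmod (u s - Sn n u s))^2) - 0) < e" by blast
qed



lemma L2C_cong: "L2C u \<Longrightarrow> (\<And>s. s \<in> Sph \<Longrightarrow> u s = v s) \<Longrightarrow> L2C v"
  unfolding L2C_def
  by (metis (no_types, lifting) Bochner_Integration.integrable_cong measurable_cong space_C)

lemma Dn_cong: assumes "Dn u" "\<And>s. s \<in> Sph \<Longrightarrow> u s = v s" shows "Dn v"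
  unfolding Dn_def
proof (intro allI impI)
  fix e :: real assume "0 < e"
  then obtain F a where "finite F" "integral\<^sup>L CM (\<lambda>s. (cmod (u s - tp F a s))^2) < e"
    using assms(1) unfolding Dn_def by blast
  moreover have "integral\<^sup>L CM (\<lambda>s. (cmod (u s - tp F a s))^2) = integral\<^sup>L CM (\<lambda>s. (cmod (v s - tp F a s))^2)"
    using assms(2) by (intro Bochner_Integration.integral_cong) auto
  ultimately show "\<exists>F a. finite F \<and> integral\<^sup>L CM (\<lambda>s. (cmod (v s - tp F a s))^2) < e" by auto
qed

lemma tp_empty: "tp {} a = (\<lambda>s. 0)" by (simp add: tp_def fun_eq_iff)

lemma Dn_tp: "finite F \<Longrightarrow> Dn (tp F a)"
  unfolding Dn_def by (intro allI impI exI[of _ F] exI[of _ a]) simp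

lemma quasi_tri:
  assumes u: "L2C u" and v: "L2C v" and w: "L2C w"
  shows "integral\<^sup>L CM (\<lambda>s. (cmod (u s - w s))^2)
     \<le> 2 * integral\<^sup>L CM (\<lambda>s. (cmod (u s - v s))^2) + 2 * integral\<^sup>L CM (\<lambda>s. (cmod (v s - w s))^2)"
proof -
  have i1: "integrable CM (\<lambda>s. (cmod (u s - v s))^2)" using L2C_diff[OF u v] unfolding L2C_def by auto
  have i2: "integrable CM (\<lambda>s. (cmod (v s - w s))^2)" using L2C_diff[OF v w] unfolding L2C_def by auto
  have i3: "integrable CM (\<lambda>s. (cmod (u s - w s))^2)" using L2C_diff[OF u w] unfolding L2C_def by auto
  have "integral\<^sup>L CM (\<lambda>s. (cmod (u s - w s))^2) \<le> integral\<^sup>L CM (\<lambda>s. 2 * (cmod (u s - v s))^2 + 2 * (cmod (v s - w s))^2)"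
  proof (rule integral_mono[OF i3])
    show "integrable CM (\<lambda>s. 2 * (cmod (u s - v s))^2 + 2 * (cmod (v s - w s))^2)" using i1 i2 by simp
    show "(cmod (u s - w s))^2 \<le> 2 * (cmod (u s - v s))^2 + 2 * (cmod (v s - w s))^2" for s
      using sq_add_le[of "u s - v s" "v s - w s"] by simp
  qed
  also have "\<dots> = 2 * integral\<^sup>L CM (\<lambda>s. (cmod (u s - v s))^2) + 2 * integral\<^sup>L CM (\<lambda>s. (cmod (v s - w s))^2)"
    using i1 i2 by simp
  finally show ?thesis .
qed

lemma Dn_closure:
  assumes u: "L2C u" and approx: "\<And>e. e > 0 \<Longrightarrow> \<exists>v. L2C v \<and> Dn v \<and> integral\<^sup>L CM (\<lambda>s. (cmod (u s - v s))^2) < e"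
  shows "Dn u"
  unfolding Dn_def
proof (intro allI impI)
  fix e :: real assume e: "0 < e"
  obtain v where v: "L2C v" "Dn v" and uv: "integral\<^sup>L CM (\<lambda>s. (cmod (u s - v s))^2) < e/4"
    using approx[of "e/4"] e by auto
  obtain F a where F: "finite F" and vF: "integral\<^sup>L CM (\<lambda>s. (cmod (v s - tp F a s))^2) < e/4"
    using v(2) e unfolding Dn_def by (meson zero_less_divide_iff zero_less_numeral)
  have "integral\<^sup>L CM (\<lambda>s. (cmod (u s - tp F a s))^2) < e"
    using quasi_tri[OF u v(1) L2C_tp[of F a]] uv vF by linarith
  then show "\<exists>F a. finite F \<and> integral\<^sup>L CM (\<lambda>s. (cmod (u s - tp F a s))^2) < e" using F by blast
qed

lemma tp_add: "finite F \<Longrightarrow> finite G \<Longrightarrow>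
  tp F a s + tp G b s = tp (F \<union> G) (\<lambda>k. (if k \<in> F then a k else 0) + (if k \<in> G then b k else 0)) s"
  using tp_extend[of F "F \<union> G" a] tp_extend[of G "F \<union> G" b]
  by (simp add: tp_def sum.distrib distrib_right)

lemma tp_cmult: "c * tp F a s = tp F (\<lambda>k. c * a k) s"
  unfolding tp_def by (simp add: sum_distrib_left ac_simps)

lemma Dn_add:
  assumes u: "L2C u" "Dn u" and v: "L2C v" "Dn v"
  shows "Dn (\<lambda>s. u s + v s)"
  unfolding Dn_def
proof (intro allI impI)
  fix e :: real assume e: "0 < e"
  obtain F a where F: "finite F" and uF: "integral\<^sup>L CM (\<lambda>s. (cmod (u s - tp F a s))^2) < e/4"
    using u(2) e unfolding Dn_def by (meson zero_less_divide_iff zero_less_numeral)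
  obtain G b where G: "finite G" and vG: "integral\<^sup>L CM (\<lambda>s. (cmod (v s - tp G b s))^2) < e/4"
    using v(2) e unfolding Dn_def by (meson zero_less_divide_iff zero_less_numeral)
  let ?c = "\<lambda>k. (if k \<in> F then a k else 0) + (if k \<in> G then b k else 0)"
  have i1: "integrable CM (\<lambda>s. (cmod (u s - tp F a s))^2)" using L2C_diff[OF u(1) L2C_tp] unfolding L2C_def by auto
  have i2: "integrable CM (\<lambda>s. (cmod (v s - tp G b s))^2)" using L2C_diff[OF v(1) L2C_tp] unfolding L2C_def by auto
  have i3: "integrable CM (\<lambda>s. (cmod (u s + v s - tp (F \<union> G) ?c s))^2)"
    using L2C_diff[OF L2C_add[OF u(1) v(1)] L2C_tp] unfolding L2C_def by auto
  have "integral\<^sup>L CM (\<lambda>s. (cmod (u s + v s - tp (F \<union> G) ?c s))^2)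
     \<le> integral\<^sup>L CM (\<lambda>s. 2 * (cmod (u s - tp F a s))^2 + 2 * (cmod (v s - tp G b s))^2)"
  proof (rule integral_mono[OF i3])
    show "integrable CM (\<lambda>s. 2 * (cmod (u s - tp F a s))^2 + 2 * (cmod (v s - tp G b s))^2)" using i1 i2 by simp
    show "(cmod (u s + v s - tp (F \<union> G) ?c s))^2 \<le> 2 * (cmod (u s - tp F a s))^2 + 2 * (cmod (v s - tp G b s))^2" for s
    proof -
      have eq: "u s + v s - tp (F \<union> G) ?c s = (u s - tp F a s) + (v s - tp G b s)"
        using tp_add[OF F G, of a s b] by (simp add: algebra_simps)
      show ?thesis unfolding eq by (rule sq_add_le)
    qed
  qed
  also have "\<dots> < e" using i1 i2 uF vG by simp
  finally show "\<exists>F a. finite F \<and> integral\<^sup>L CM (\<lambda>s. (cmod (u s + v s - tp F a s))^2) < e"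
    using F G by blast
qed

lemma Dn_cmult:
  assumes u: "L2C u" "Dn u"
  shows "Dn (\<lambda>s. c * u s)"
proof (cases "c = 0")
  case True
  then show ?thesis using Dn_tp[of "{}" undefined] by (simp add: Dn_def tp_def)
next
  case False
  show ?thesis unfolding Dn_def
  proof (intro allI impI)
    fix e :: real assume e: "0 < e"
    have c2: "0 < (cmod c)^2" using False by simp
    obtain F a where F: "finite F" and uF: "integral\<^sup>L CM (\<lambda>s. (cmod (u s - tp F a s))^2) < e / (cmod c)^2"
      using u(2) e c2 unfolding Dn_def by (meson divide_pos_pos)
    have "integral\<^sup>L CM (\<lambda>s. (cmod (c * u s - tp F (\<lambda>k. c * a k) s))^2)
        = integral\<^sup>L CM (\<lambda>s. (cmod c)^2 * (cmod (u s - tp F a s))^2)"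
      by (intro Bochner_Integration.integral_cong refl)
         (simp add: tp_cmult[symmetric] right_diff_distrib[symmetric] norm_mult power_mult_distrib)
    also have "\<dots> = (cmod c)^2 * integral\<^sup>L CM (\<lambda>s. (cmod (u s - tp F a s))^2)" by simp
    also have "\<dots> < e" using uF c2 by (simp add: field_simps)
    finally show "\<exists>F a. finite F \<and> integral\<^sup>L CM (\<lambda>s. (cmod (c * u s - tp F a s))^2) < e"
      using F by blast
  qed
qed

lemma Dn_sum:
  assumes "finite I" "\<And>i. i \<in> I \<Longrightarrow> L2C (f i) \<and> Dn (f i)"
  shows "L2C (\<lambda>s. \<Sum>i\<in>I. f i s) \<and> Dn (\<lambda>s. \<Sum>i\<in>I. f i s)"
  using assms
proof (induction I rule: finite_induct)
  case empty
  then show ?case using L2C_tp[of "{}" undefined] Dn_tp[of "{}" undefined] by (simp add: tp_empty)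
next
  case (insert x F)
  then show ?case using L2C_add[of "f x"] Dn_add[of "f x"] by simp
qed

lemma integrable_const_C: "integrable CM (\<lambda>s. c::real)"
  by simp

lemma Dn_uniform:
  assumes u: "L2C u"
    and unif: "\<And>e. e > 0 \<Longrightarrow> \<exists>F a. finite F \<and> (\<forall>s\<in>Sph. cmod (u s - tp F a s) \<le> e)"
  shows "Dn u"
  unfolding Dn_def
proof (intro allI impI)
  fix e :: real assume e: "0 < e"
  define d where "d = sqrt (e / (4*pi))"
  have d: "0 < d" "d^2 = e / (4*pi)" unfolding d_def using e by auto
  obtain F a where F: "finite F" and Fa: "\<forall>s\<in>Sph. cmod (u s - tp F a s) \<le> d"
    using unif[OF d(1)] by blast
  have i: "integrable CM (\<lambda>s. (cmod (u s - tp F a s))^2)" using L2C_diff[OF u L2C_tp] unfolding L2C_def by auto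
  have "integral\<^sup>L CM (\<lambda>s. (cmod (u s - tp F a s))^2) \<le> integral\<^sup>L CM (\<lambda>s. d^2)"
    using Fa by (intro integral_mono_AE i) (auto intro!: AE_I2 power_mono)
  also have "\<dots> = d^2 * (2*pi)" using measure_C by simp
  also have "\<dots> < e" using d e by (simp add: field_simps)
  finally show "\<exists>F a. finite F \<and> integral\<^sup>L CM (\<lambda>s. (cmod (u s - tp F a s))^2) < e" using F by blast
qed



definition TPS :: "(complex \<Rightarrow> complex) \<Rightarrow> bool" where
  "TPS h \<longleftrightarrow> (\<exists>F a. finite F \<and> (\<forall>s\<in>Sph. h s = tp F a s))"

lemma TPS_cong: "TPS f \<Longrightarrow> (\<And>s. s \<in> Sph \<Longrightarrow> f s = g s) \<Longrightarrow> TPS g"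
  unfolding TPS_def by metis

lemma TPS_monom: "TPS (\<lambda>s. c * s powi m)"
  unfolding TPS_def by (intro exI[of _ "{m}"] exI[of _ "\<lambda>_. c"]) (simp add: tp_def)

lemma TPS_const: "TPS (\<lambda>s. c)"
  using TPS_monom[of c 0] by simp

lemma TPS_add: "TPS f \<Longrightarrow> TPS g \<Longrightarrow> TPS (\<lambda>s. f s + g s)"
  unfolding TPS_def
proof (elim exE conjE)
  fix F a G b assume F: "finite F" "\<forall>s\<in>Sph. f s = tp F a s" and G: "finite G" "\<forall>s\<in>Sph. g s = tp G b s"
  show "\<exists>H c. finite H \<and> (\<forall>s\<in>Sph. f s + g s = tp H c s)"
    using F G tp_add[OF F(1) G(1)] by (intro exI[of _ "F \<union> G"]) auto
qed

lemma TPS_sum: "finite I \<Longrightarrow> (\<And>i. i \<in> I \<Longrightarrow> TPS (f i)) \<Longrightarrow> TPS (\<lambda>s. \<Sum>i\<in>I. f i s)"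
proof (induction I rule: finite_induct)
  case empty
  then show ?case using TPS_const[of 0] by simp
next
  case (insert x F)
  then show ?case using TPS_add[of "f x" "\<lambda>s. \<Sum>i\<in>F. f i s"] by simp
qed

lemma TPS_mult: assumes "TPS f" "TPS g" shows "TPS (\<lambda>s. f s * g s)"
proof -
  obtain F a where F: "finite F" "\<forall>s\<in>Sph. f s = tp F a s" using assms(1) unfolding TPS_def by blast
  obtain G b where G: "finite G" "\<forall>s\<in>Sph. g s = tp G b s" using assms(2) unfolding TPS_def by blast
  have "TPS (\<lambda>s. \<Sum>j\<in>F. \<Sum>k\<in>G. (a j * b k) * s powi (j + k))"
    using F(1) G(1) by (intro TPS_sum TPS_monom)
  then show ?thesis
  proof (rule TPS_cong)
    fix s assume s: "s \<in> Sph"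
    have "f s * g s = (\<Sum>j\<in>F. a j * s powi j) * (\<Sum>k\<in>G. b k * s powi k)"
      using F(2) G(2) s by (simp add: tp_def)
    also have "\<dots> = (\<Sum>j\<in>F. \<Sum>k\<in>G. (a j * b k) * (s powi j * s powi k))"
      by (simp add: sum_product ac_simps)
    also have "\<dots> = (\<Sum>j\<in>F. \<Sum>k\<in>G. (a j * b k) * s powi (j + k))"
      using s by (simp add: powi_mult_Sph)
    finally show "(\<Sum>j\<in>F. \<Sum>k\<in>G. (a j * b k) * s powi (j + k)) = f s * g s" by simp
  qed
qed

lemma Re_Sph: "s \<in> Sph \<Longrightarrow> complex_of_real (Re s) = (1/2) * s powi 1 + (1/2) * s powi (-1)"
proof -
  assume s: "s \<in> Sph"
  have "s + cnj s = complex_of_real (2 * Re s)" by (rule complex_add_cnj)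
  moreover have "cnj s = s powi (-1)" using s by (simp add: cnj_Sph power_int_minus)
  ultimately show ?thesis by (simp add: field_simps)
qed

lemma Im_Sph: "s \<in> Sph \<Longrightarrow> complex_of_real (Im s) = (1/(2*\<i>)) * s powi 1 + (-1/(2*\<i>)) * s powi (-1)"
proof -
  assume s: "s \<in> Sph"
  have "s - cnj s = complex_of_real (2 * Im s) * \<i>" by (rule complex_diff_cnj)
  moreover have "cnj s = s powi (-1)" using s by (simp add: cnj_Sph power_int_minus)
  ultimately show ?thesis by (simp add: field_simps)
qed

lemma TPS_Re: "TPS (\<lambda>s. complex_of_real (Re s))"
  by (rule TPS_cong[OF TPS_add[OF TPS_monom[of "1/2" 1] TPS_monom[of "1/2" "-1"]]]) (rule Re_Sph[symmetric])

lemma TPS_Im: "TPS (\<lambda>s. complex_of_real (Im s))"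
  by (rule TPS_cong[OF TPS_add[OF TPS_monom[of "1/(2*\<i>)" 1] TPS_monom[of "-1/(2*\<i>)" "-1"]]]) (rule Im_Sph[symmetric])

lemma linear_complex_real:
  assumes "bounded_linear (q :: complex \<Rightarrow> real)"
  shows "q s = Re s * q 1 + Im s * q \<i>"
proof -
  interpret bounded_linear q by fact
  have "s = Re s *\<^sub>R 1 + Im s *\<^sub>R \<i>" by (simp add: complex_eq_iff)
  then have "q s = q (Re s *\<^sub>R 1 + Im s *\<^sub>R \<i>)" by simp
  also have "\<dots> = Re s * q 1 + Im s * q \<i>" by (simp add: add scaleR)
  finally show ?thesis .
qed

lemma rpf_TPS: "real_polynomial_function q \<Longrightarrow> TPS (\<lambda>s. complex_of_real (q s))"
proof (induction rule: real_polynomial_function.induct)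
  case (linear f)
  have "TPS (\<lambda>s. complex_of_real (Re s) * complex_of_real (f 1) + complex_of_real (Im s) * complex_of_real (f \<i>))"
    by (rule TPS_add[OF TPS_mult[OF TPS_Re TPS_const] TPS_mult[OF TPS_Im TPS_const]])
  then show ?case
  proof (rule TPS_cong)
    fix s
    have e: "f s = Re s * f 1 + Im s * f \<i>" by (rule linear_complex_real[OF linear])
    show "complex_of_real (Re s) * complex_of_real (f 1) + complex_of_real (Im s) * complex_of_real (f \<i>) = complex_of_real (f s)"
      unfolding e by simp
  qed
next
  case (const c)
  then show ?case by (rule TPS_const)
next
  case (add f g)
  then show ?case using TPS_add by simp
next
  case (mult f g)
  then show ?case using TPS_mult by simp
qed

lemma cont_unif:
  assumes g: "continuous_on Sph g" and e: "e > 0"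
  shows "\<exists>F a. finite F \<and> (\<forall>s\<in>Sph. cmod (g s - tp F a s) \<le> e)"
proof -
  have e2: "e/2 > 0" using e by simp
  have c1: "continuous_on Sph (\<lambda>s. Re (g s))" using g by (intro continuous_intros)
  have c2: "continuous_on Sph (\<lambda>s. Im (g s))" using g by (intro continuous_intros)
  obtain q1 where q1: "real_polynomial_function q1" "\<And>s. s \<in> Sph \<Longrightarrow> \<bar>Re (g s) - q1 s\<bar> < e/2"
    using Stone_Weierstrass_real_polynomial_function[OF compact_sphere c1 e2] by blast
  obtain q2 where q2: "real_polynomial_function q2" "\<And>s. s \<in> Sph \<Longrightarrow> \<bar>Im (g s) - q2 s\<bar> < e/2"
    using Stone_Weierstrass_real_polynomial_function[OF compact_sphere c2 e2] by blast
  have "TPS (\<lambda>s. complex_of_real (q1 s) + \<i> * complex_of_real (q2 s))"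
    by (rule TPS_add[OF rpf_TPS[OF q1(1)] TPS_mult[OF TPS_const rpf_TPS[OF q2(1)]]])
  then obtain F a where F: "finite F" "\<forall>s\<in>Sph. complex_of_real (q1 s) + \<i> * complex_of_real (q2 s) = tp F a s"
    unfolding TPS_def by blast
  have "cmod (g s - tp F a s) \<le> e" if s: "s \<in> Sph" for s
  proof -
    have tpe: "tp F a s = complex_of_real (q1 s) + \<i> * complex_of_real (q2 s)" using F(2) s by simp
    have "cmod (g s - tp F a s) \<le> \<bar>Re (g s - tp F a s)\<bar> + \<bar>Im (g s - tp F a s)\<bar>" by (rule cmod_le)
    also have "Re (g s - tp F a s) = Re (g s) - q1 s" unfolding tpe by simp
    also have "Im (g s - tp F a s) = Im (g s) - q2 s" unfolding tpe by simp
    finally show ?thesis using q1(2)[OF s] q2(2)[OF s] by linarith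
  qed
  then show ?thesis using F(1) by blast
qed

lemma L2C_Dn_cont:
  assumes g: "continuous_on Sph g"
  shows "L2C g \<and> Dn g"
proof -
  have gm: "g \<in> borel_measurable CM" by (rule cont_meas_C[OF g])
  have "compact (g ` Sph)" by (rule compact_continuous_image[OF g compact_sphere])
  then obtain B where B: "\<And>s. s \<in> Sph \<Longrightarrow> cmod (g s) \<le> B"
    using compact_imp_bounded bounded_iff by (metis image_eqI)
  have L: "L2C g" by (rule L2C_bounded[OF gm B])
  have "Dn g" by (rule Dn_uniform[OF L cont_unif[OF g]])
  then show ?thesis using L by blast
qed



lemma Dn_limit:
  assumes u: "L2C u" and v: "\<And>m. L2C (v m) \<and> Dn (v m)"
    and lim: "(\<lambda>m. integral\<^sup>L CM (\<lambda>s. (cmod (u s - v m s))^2)) \<longlonglongrightarrow> 0"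
  shows "Dn u"
proof (rule Dn_closure[OF u])
  fix e :: real assume e: "e > 0"
  from order_tendstoD(2)[OF lim e] obtain m where "integral\<^sup>L CM (\<lambda>s. (cmod (u s - v m s))^2) < e"
    by (auto simp: eventually_sequentially)
  then show "\<exists>w. L2C w \<and> Dn w \<and> integral\<^sup>L CM (\<lambda>s. (cmod (u s - w s))^2) < e" using v by blast
qed

lemma L2_dom_conv:
  assumes um[measurable]: "u \<in> borel_measurable CM" and vm[measurable]: "\<And>m. v m \<in> borel_measurable CM"
    and lim: "\<And>s. s \<in> Sph \<Longrightarrow> (\<lambda>m. v m s) \<longlonglongrightarrow> u s"
    and bound: "\<And>m s. s \<in> Sph \<Longrightarrow> (cmod (u s - v m s))^2 \<le> w s"
    and w: "integrable CM w"
  shows "(\<lambda>m. integral\<^sup>L CM (\<lambda>s. (cmod (u s - v m s))^2)) \<longlonglongrightarrow> 0"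
proof -
  have "(\<lambda>m. integral\<^sup>L CM (\<lambda>s. (cmod (u s - v m s))^2)) \<longlonglongrightarrow> integral\<^sup>L CM (\<lambda>s. 0::real)"
  proof (rule integral_dominated_convergence[OF _ _ w])
    show "(\<lambda>s. 0::real) \<in> borel_measurable CM" by simp
    show "(\<lambda>s. (cmod (u s - v m s))^2) \<in> borel_measurable CM" for m by measurable
    show "AE s in CM. (\<lambda>m. (cmod (u s - v m s))^2) \<longlonglongrightarrow> 0"
    proof (intro AE_I2)
      fix s assume "s \<in> space CM"
      then have sS: "s \<in> Sph" by simp
      have "(\<lambda>m. u s - v m s) \<longlonglongrightarrow> u s - u s" by (rule tendsto_diff[OF tendsto_const lim[OF sS]])
      then have "(\<lambda>m. (cmod (u s - v m s))^2) \<longlonglongrightarrow> (cmod (u s - u s))^2" by (rule tendsto_power[OF tendsto_norm])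
      then show "(\<lambda>m. (cmod (u s - v m s))^2) \<longlonglongrightarrow> 0" by simp
    qed
    show "AE s in CM. norm ((cmod (u s - v m s))^2) \<le> w s" for m
      using bound by (intro AE_I2) auto
  qed
  then show ?thesis by simp
qed

lemma ind_meas: "B \<in> sets borel \<Longrightarrow> (\<lambda>s. indicator B s :: complex) \<in> borel_measurable CM"
  unfolding meas_C_eq by (intro measurable_restrict_space1 borel_measurable_indicator)

lemma L2C_ind: "B \<in> sets borel \<Longrightarrow> L2C (\<lambda>s. indicator B s :: complex)"
  by (rule L2C_bounded[OF ind_meas, of B 1]) (auto simp: indicator_def)

lemma Dn_one: "L2C (\<lambda>s. 1) \<and> Dn (\<lambda>s. 1)"
proof -
  have e: "tp {0} (\<lambda>_. 1) = (\<lambda>s. 1)" by (simp add: tp_def fun_eq_iff)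
  show ?thesis using L2C_tp[of "{0}" "\<lambda>_. 1"] Dn_tp[of "{0}" "\<lambda>_. 1"] unfolding e by simp
qed

lemma Dn_open:
  assumes U: "open U"
  shows "Dn (\<lambda>s. indicator U s :: complex)"
proof (cases "U = UNIV")
  case True
  then show ?thesis using Dn_one by simp
next
  case False
  let ?v = "\<lambda>m s. complex_of_real (min 1 (real m * infdist s (- U)))"
  have cl: "closed (- U)" "- U \<noteq> {}" using U False by auto
  have cont: "continuous_on Sph (?v m)" for m
    by (intro continuous_intros)
  have vD: "L2C (?v m) \<and> Dn (?v m)" for m by (rule L2C_Dn_cont[OF cont])
  have Ub: "U \<in> sets borel" using U by simp
  show ?thesis
  proof (rule Dn_limit[OF L2C_ind[OF Ub] vD])
    show "(\<lambda>m. integral\<^sup>L CM (\<lambda>s. (cmod (indicator U s - ?v m s))^2)) \<longlonglongrightarrow> 0"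
    proof (rule L2_dom_conv[where w="\<lambda>_. 1"])
      show "(\<lambda>s. indicator U s :: complex) \<in> borel_measurable CM" by (rule ind_meas[OF Ub])
      show "?v m \<in> borel_measurable CM" for m by (rule cont_meas_C[OF cont])
      show "integrable CM (\<lambda>_. 1::real)" by simp
      show "(cmod (indicator U s - ?v m s))^2 \<le> 1" for m s
      proof -
        have "0 \<le> min 1 (real m * infdist s (- U))" by (simp add: infdist_nonneg)
        then have "\<bar>indicator U s - min 1 (real m * infdist s (- U))\<bar> \<le> (1::real)"
          by (auto simp: indicator_def)
        then have "cmod (indicator U s - ?v m s) \<le> 1"
          by (metis norm_of_real of_real_diff of_real_indicator) 
        then show ?thesis by (simp add: power_le_one)
      qed
      show "(\<lambda>m. ?v m s) \<longlonglongrightarrow> indicator U s" for s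
      proof (cases "s \<in> U")
        case True
        have d: "infdist s (- U) > 0" using infdist_pos_not_in_closed[OF cl] True by auto
        obtain N :: nat where N: "1 / infdist s (- U) < real N" using reals_Archimedean2 by blast
        have "eventually (\<lambda>m. ?v m s = 1) sequentially"
          unfolding eventually_sequentially
        proof (intro exI[of _ N] allI impI)
          fix m assume "N \<le> m"
          then have "1 / infdist s (- U) < real m" using N by linarith
          then have "1 \<le> real m * infdist s (- U)" using d by (simp add: field_simps)
          then show "?v m s = 1" by simp
        qed
        then have "(\<lambda>m. ?v m s) \<longlonglongrightarrow> 1" by (rule tendsto_eventually)
        then show ?thesis using True by simp
      next
        case False
        then show ?thesis by simp
      qed
    qed
  qed
qed

lemma Dn_borel:
  assumes B: "B \<in> sets borel"
  shows "Dn (\<lambda>s. indicator B s :: complex)"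
proof -
  have B': "B \<in> sigma_sets UNIV {S. open S}" using B by (simp add: sets_borel)
  have IS: "Int_stable {S::complex set. open S}" by (auto simp: Int_stable_def)
  have PW: "{S::complex set. open S} \<subseteq> Pow UNIV" by auto
  from IS PW B' show ?thesis
  proof (induction rule: sigma_sets_induct_disjoint)
    case (basic A) then show ?case by (intro Dn_open) simp
  next
    case empty then show ?case using Dn_tp[of "{}" undefined] by (simp add: tp_empty)
  next
    case (compl A)
    have Ab: "A \<in> sets borel" using compl(1) by (simp add: sets_borel)
    have "Dn (\<lambda>s. 1 + (-1) * indicator A s)"
      by (intro Dn_add Dn_cmult L2C_cmult L2C_ind Ab compl(2) Dn_one[THEN conjunct1] Dn_one[THEN conjunct2])
    then show ?case by (rule Dn_cong) (simp add: indicator_def)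
  next
    case (union A)
    have Ab: "A i \<in> sets borel" for i using union(2) by (auto simp: sets_borel)
    have Ub: "(\<Union>i. A i) \<in> sets borel" using Ab by auto
    let ?v = "\<lambda>m s. (\<Sum>i<m. indicator (A i) s) :: complex"
    have vD: "L2C (?v m) \<and> Dn (?v m)" for m
      by (intro Dn_sum) (auto intro: L2C_ind Ab union(3))
    have veq: "?v m s = indicator (\<Union>i<m. A i) s" for m s
    proof -
      have "indicator (\<Union>(A ` {..<m})) s = (\<Sum>i<m. indicator (A i) s :: complex)"
        by (rule indicator_UN_disjoint) (use union(1) in \<open>auto simp: disjoint_family_on_def\<close>)
      then show ?thesis by simp
    qed
    show ?case
    proof (rule Dn_limit[OF L2C_ind[OF Ub] vD])
      show "(\<lambda>m. integral\<^sup>L CM (\<lambda>s. (cmod (indicator (\<Union>i. A i) s - ?v m s))^2)) \<longlonglongrightarrow> 0"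
      proof (rule L2_dom_conv[where w="\<lambda>_. 1"])
        show "(\<lambda>s. indicator (\<Union>i. A i) s :: complex) \<in> borel_measurable CM" by (rule ind_meas[OF Ub])
        show "?v m \<in> borel_measurable CM" for m using vD[of m] unfolding L2C_def by blast
        show "integrable CM (\<lambda>_. 1::real)" by simp
        show "(cmod (indicator (\<Union>i. A i) s - ?v m s))^2 \<le> 1" for m s
          unfolding veq by (auto simp: indicator_def)
        show "(\<lambda>m. ?v m s) \<longlonglongrightarrow> indicator (\<Union>i. A i) s" for s
          unfolding veq by (rule LIMSEQ_indicator_UN)
      qed
    qed
  qed
qed



lemma Dn_setsC:
  assumes A: "A \<in> sets CM"
  shows "L2C (\<lambda>s. indicator A s :: complex) \<and> Dn (\<lambda>s. indicator A s :: complex)"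
proof -
  have "A \<in> sets (restrict_space borel Sph)" using A sets_C by simp
  then obtain B where B: "B \<in> sets borel" "A = Sph \<inter> B" unfolding sets_restrict_space by blast
  have eq: "indicator B s = (indicator A s :: complex)" if "s \<in> Sph" for s
    using that B(2) by (simp add: indicator_def)
  show ?thesis using L2C_cong[OF L2C_ind[OF B(1)] eq] Dn_cong[OF Dn_borel[OF B(1)] eq] by blast
qed

lemma Dn_all:
  assumes u: "L2C u"
  shows "Dn u"
proof -
  have um[measurable]: "u \<in> borel_measurable CM" and ui: "integrable CM (\<lambda>s. (cmod (u s))^2)"
    using u unfolding L2C_def by auto
  obtain F where F: "\<And>i. simple_function CM (F i)" "\<And>x. x \<in> space CM \<Longrightarrow> (\<lambda>i. F i x) \<longlonglongrightarrow> u x"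
    "\<And>i x. x \<in> space CM \<Longrightarrow> dist (F i x) 0 \<le> 2 * dist (u x) 0"
    using borel_measurable_implies_sequence_metric[OF um, of 0] by blast
  have Fm: "F i \<in> borel_measurable CM" for i by (rule borel_measurable_simple_function[OF F(1)])
  have FL: "L2C (F i)" for i
    unfolding L2C_def
  proof
    show "F i \<in> borel_measurable CM" by (rule Fm)
    show "integrable CM (\<lambda>s. (cmod (F i s))^2)"
    proof (rule Bochner_Integration.integrable_bound)
      show "integrable CM (\<lambda>s. 4 * (cmod (u s))^2)" using ui by simp
      show "(\<lambda>s. (cmod (F i s))^2) \<in> borel_measurable CM" using Fm[of i] by measurable
      show "AE x in CM. norm ((cmod (F i x))^2) \<le> norm (4 * (cmod (u x))^2)"
      proof (intro AE_I2)
        fix x assume x: "x \<in> space CM"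
        have "cmod (F i x) \<le> 2 * cmod (u x)" using F(3)[OF x, of i] by (simp add: dist_norm)
        then have "(cmod (F i x))^2 \<le> (2 * cmod (u x))^2" by (intro power_mono) auto
        then show "norm ((cmod (F i x))^2) \<le> norm (4 * (cmod (u x))^2)" by (simp add: power_mult_distrib)
      qed
    qed
  qed
  have FD: "Dn (F i)" for i
  proof -
    let ?R = "\<lambda>s. \<Sum>y\<in>F i ` space CM. y * indicator (F i -` {y} \<inter> space CM) s"
    have fin: "finite (F i ` space CM)" using simple_functionD(1)[OF F(1)] .
    have "L2C ?R \<and> Dn ?R"
    proof (rule Dn_sum[OF fin])
      fix y assume "y \<in> F i ` space CM"
      have S: "F i -` {y} \<inter> space CM \<in> sets CM" by (rule simple_functionD(2)[OF F(1)])
      show "L2C (\<lambda>s. y * indicator (F i -` {y} \<inter> space CM) s) \<and> Dn (\<lambda>s. y * indicator (F i -` {y} \<inter> space CM) s)"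
      proof -
        have d1: "L2C (\<lambda>s. indicator (F i -` {y} \<inter> space CM) s :: complex)"
          and d2: "Dn (\<lambda>s. indicator (F i -` {y} \<inter> space CM) s :: complex)"
          using Dn_setsC[OF S] by auto
        show ?thesis using L2C_cmult[OF d1, of y] Dn_cmult[OF d1 d2, of y] by blast
      qed
    qed
    then have "Dn ?R" by (rule conjunct2)
    then show ?thesis
    proof (rule Dn_cong)
      fix s assume s: "s \<in> Sph"
      have sp: "s \<in> space CM" using s by simp
      have "F i s = (\<Sum>y\<in>F i ` space CM. indicator (F i -` {y} \<inter> space CM) s *\<^sub>R y)"
        by (rule simple_function_indicator_representation_banach[OF F(1) sp])
      also have "\<dots> = ?R s"
        by (intro sum.cong refl) (simp add: scaleR_conv_of_real indicator_def)
      finally show "?R s = F i s" by (rule sym)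
    qed
  qed
  show ?thesis
  proof (rule Dn_limit[OF u])
    show "L2C (F m) \<and> Dn (F m)" for m using FL FD by blast
    show "(\<lambda>m. integral\<^sup>L CM (\<lambda>s. (cmod (u s - F m s))^2)) \<longlonglongrightarrow> 0"
    proof (rule L2_dom_conv[OF um Fm, where w="\<lambda>s. 9 * (cmod (u s))^2"])
      show "(\<lambda>m. F m s) \<longlonglongrightarrow> u s" if "s \<in> Sph" for s using F(2) that by simp
      show "integrable CM (\<lambda>s. 9 * (cmod (u s))^2)" using ui by simp
      show "(cmod (u s - F m s))^2 \<le> 9 * (cmod (u s))^2" if s: "s \<in> Sph" for m s
      proof -
        have "cmod (F m s) \<le> 2 * cmod (u s)" using F(3)[of s m] s by (simp add: dist_norm)
        then have "cmod (u s - F m s) \<le> 3 * cmod (u s)" using norm_triangle_ineq4[of "u s" "F m s"] by linarith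
        then have "(cmod (u s - F m s))^2 \<le> (3 * cmod (u s))^2" by (intro power_mono) auto
        then show ?thesis by (simp add: power_mult_distrib)
      qed
    qed
  qed
qed

theorem fourier_L2_circle:
  assumes "L2C u"
  shows "(\<lambda>n. integral\<^sup>L CM (\<lambda>s. (cmod (u s - Sn n u s))^2)) \<longlonglongrightarrow> 0"
  by (rule conv_of_D[OF assms Dn_all[OF assms]])



interpretation PS: product_sigma_finite "\<lambda>_::nat. CM"
  by standard

lemma npow2: "(norm (z::complex)) powr 2 = (norm z)^2"
  by simp

lemma fiber_meas:
  assumes t: "t \<in> space (PiM J (\<lambda>_. CM))" and i: "i \<notin> J"
    and g: "g \<in> borel_measurable (PiM (insert i J) (\<lambda>_. CM))"
  shows "(\<lambda>s. g (t(i := s))) \<in> borel_measurable CM"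
  using measurable_compose[OF measurable_component_update[OF t i] g] .

lemma C1_upd: "C1 k g (t(1 := s)) = coef (\<lambda>s'. g (t(1 := s'))) k"
  unfolding C1_def coef_def by simp

lemma gen:
  fixes g :: "(nat \<Rightarrow> complex) \<Rightarrow> complex" and h :: "nat \<Rightarrow> (nat \<Rightarrow> complex) \<Rightarrow> complex"
  assumes I: "finite I" "1 \<in> I"
    and gm: "g \<in> borel_measurable (torus_on I)"
    and gL: "(\<integral>\<^sup>+ x. ennreal (norm (g x) powr 2) \<partial>torus_on I) < \<infinity>"
    and h: "\<And>n t. t \<in> space (torus_on I) \<Longrightarrow> h n t = (\<Sum>k\<in>{-int n..int n}. (t 1) powi k * C1 k g t)"
  shows "(\<forall>n. Lp_mem 2 (torus_on I) (h n)) \<and> Lp_conv 2 (torus_on I) h g"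
proof -
  define J where "J = I - {1}"
  have IJ: "I = insert 1 J" "1 \<notin> J" "finite J" using I unfolding J_def by auto
  let ?P = "PiM J (\<lambda>_::nat. CM)"
  have T: "torus_on I = PiM (insert 1 J) (\<lambda>_. CM)" unfolding torus_on_def IJ(1) ..
  note gm' = gm[unfolded T]
  have C1m: "(\<lambda>t. C1 k g t) \<in> borel_measurable (torus_on I)" for k
  proof -
    have upd: "(\<lambda>x. (fst x)(1 := snd x)) \<in> measurable (torus_on I \<Otimes>\<^sub>M CM) (torus_on I)"
      unfolding torus_on_def by (rule measurable_fun_upd[where J=I]) (use I in auto)
    have "(\<lambda>x. g ((fst x)(1 := snd x)) * snd x powi (-k)) \<in> borel_measurable (torus_on I \<Otimes>\<^sub>M CM)"
      using measurable_compose[OF upd gm] by measurable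
    then have "(\<lambda>t. \<integral>s. g (t(1 := s)) * s powi (-k) \<partial>CM) \<in> borel_measurable (torus_on I)"
      by (intro C.borel_measurable_lebesgue_integral) (simp add: split_beta')
    then show ?thesis unfolding C1_def by measurable
  qed
  have comp1: "(\<lambda>t. t 1) \<in> measurable (torus_on I) CM"
    unfolding torus_on_def using I(2) by (rule measurable_component_singleton)
  have hm: "h n \<in> borel_measurable (torus_on I)" for n
  proof -
    have "(\<lambda>t. \<Sum>k\<in>{-int n..int n}. (t 1) powi k * C1 k g t) \<in> borel_measurable (torus_on I)"
      using measurable_compose[OF comp1 powi_meas_C] C1m by measurable
    then show ?thesis by (rule measurable_cong[THEN iffD1, rotated]) (simp add: h)
  qed
  define Phi where "Phi n t = (\<integral>\<^sup>+ s. ennreal ((norm (h n (t(1 := s)) - g (t(1 := s))))^2) \<partial>CM)" for n t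
  define Psi where "Psi t = (\<integral>\<^sup>+ s. ennreal ((norm (g (t(1 := s))))^2) \<partial>CM)" for t
  have hm': "h n \<in> borel_measurable (PiM (insert 1 J) (\<lambda>_. CM))" for n using hm[of n] unfolding T .
  have Phim: "Phi n \<in> borel_measurable ?P" for n
  proof -
    have "(\<lambda>x. ennreal ((norm (h n ((fst x)(1 := snd x)) - g ((fst x)(1 := snd x))))^2)) \<in> borel_measurable (?P \<Otimes>\<^sub>M CM)"
      using measurable_compose[OF measurable_add_dim[of 1 J "\<lambda>_. CM"] hm'[of n]]
            measurable_compose[OF measurable_add_dim[of 1 J "\<lambda>_. CM"] gm']
      by (simp add: split_beta') measurable
    then show ?thesis unfolding Phi_def
      by (intro C.borel_measurable_nn_integral) (simp add: split_beta')
  qed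
  have Psim: "Psi \<in> borel_measurable ?P"
  proof -
    have "(\<lambda>x. ennreal ((norm (g ((fst x)(1 := snd x))))^2)) \<in> borel_measurable (?P \<Otimes>\<^sub>M CM)"
      using measurable_compose[OF measurable_add_dim[of 1 J "\<lambda>_. CM"] gm']
      by (simp add: split_beta') measurable
    then show ?thesis unfolding Psi_def
      by (intro C.borel_measurable_nn_integral) (simp add: split_beta')
  qed
  have int_g: "(\<integral>\<^sup>+ x. ennreal ((norm (g x))^2) \<partial>torus_on I) = (\<integral>\<^sup>+ t. Psi t \<partial>?P)"
    unfolding T Psi_def
    by (rule PS.product_nn_integral_insert[OF IJ(3) IJ(2)]) (use gm' in measurable)
  have int_hg: "(\<integral>\<^sup>+ x. ennreal ((norm (h n x - g x))^2) \<partial>torus_on I) = (\<integral>\<^sup>+ t. Phi n t \<partial>?P)" for n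
    unfolding T Phi_def
    by (rule PS.product_nn_integral_insert[OF IJ(3) IJ(2)]) (use gm' hm'[of n] in measurable)
  have PsiL: "(\<integral>\<^sup>+ t. Psi t \<partial>?P) < \<infinity>" using gL int_g by (simp add: npow2)
  have fib: "Phi n t = ennreal (integral\<^sup>L CM (\<lambda>s. (cmod (u s - Sn n u s))^2))
          \<and> Psi t = ennreal (integral\<^sup>L CM (\<lambda>s. (cmod (u s))^2)) \<and> L2C u"
    if t: "t \<in> space ?P" and fin: "Psi t \<noteq> \<infinity>" and u: "u = (\<lambda>s. g (t(1 := s)))" for n t u
  proof -
    have um: "u \<in> borel_measurable CM" unfolding u by (rule fiber_meas[OF t IJ(2) gm'])
    have ui: "integrable CM (\<lambda>s. (cmod (u s))^2)"
      unfolding integrable_iff_bounded using um fin by (auto simp: Psi_def u top.not_eq_extremum)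
    have uL: "L2C u" unfolding L2C_def using um ui by blast
    have sp: "t(1 := s) \<in> space (torus_on I)" if "s \<in> Sph" for s
      using t that IJ unfolding T by (auto simp: space_PiM PiE_iff extensional_def)
    have heq: "h n (t(1 := s)) = Sn n u s" if "s \<in> Sph" for s
      unfolding h[OF sp[OF that]] Sn_def u C1_upd by simp
    have "Phi n t = (\<integral>\<^sup>+ s. ennreal ((cmod (u s - Sn n u s))^2) \<partial>CM)"
      unfolding Phi_def
    proof (intro nn_integral_cong)
      fix s assume "s \<in> space CM"
      then have e: "h n (t(1 := s)) = Sn n u s" using heq by simp
      show "ennreal ((norm (h n (t(1 := s)) - g (t(1 := s))))^2) = ennreal ((cmod (u s - Sn n u s))^2)"
        unfolding e by (simp add: u norm_minus_commute)
    qed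
    also have "\<dots> = ennreal (integral\<^sup>L CM (\<lambda>s. (cmod (u s - Sn n u s))^2))"
      using L2C_diff[OF uL L2C_Sn[of n u]] unfolding L2C_def
      by (intro nn_integral_eq_integral) auto
    finally have 1: "Phi n t = ennreal (integral\<^sup>L CM (\<lambda>s. (cmod (u s - Sn n u s))^2))" .
    have 2: "Psi t = ennreal (integral\<^sup>L CM (\<lambda>s. (cmod (u s))^2))"
    proof -
      have "Psi t = (\<integral>\<^sup>+ s. ennreal ((cmod (u s))^2) \<partial>CM)" by (simp add: Psi_def u)
      also have "\<dots> = ennreal (integral\<^sup>L CM (\<lambda>s. (cmod (u s))^2))"
        using ui by (intro nn_integral_eq_integral) auto
      finally show ?thesis .
    qed
    show ?thesis using 1 2 uL by blast
  qed
  have bound: "Phi n t \<le> Psi t" if t: "t \<in> space ?P" for n t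
  proof (cases "Psi t = \<infinity>")
    case True then show ?thesis by simp
  next
    case False
    from fib[OF t False refl, of n] bessel[of "\<lambda>s. g (t(1 := s))" n]
    show ?thesis by (auto intro: ennreal_leI)
  qed
  have lim: "AE t in ?P. (\<lambda>n. Phi n t) \<longlonglongrightarrow> 0"
  proof -
    have "AE t in ?P. Psi t \<noteq> \<infinity>" using PsiL by (intro nn_integral_PInf_AE Psim) auto
    then show ?thesis
    proof (rule AE_mp, intro AE_I2 impI)
      fix t assume t: "t \<in> space ?P" and fin: "Psi t \<noteq> \<infinity>"
      have uL: "L2C (\<lambda>s. g (t(1 := s)))" using fib[OF t fin refl, of 0] by blast
      have "(\<lambda>n. ennreal (integral\<^sup>L CM (\<lambda>s. (cmod (g (t(1 := s)) - Sn n (\<lambda>s. g (t(1 := s))) s))^2))) \<longlonglongrightarrow> ennreal 0"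
        by (intro tendsto_ennrealI fourier_L2_circle[OF uL])
      then show "(\<lambda>n. Phi n t) \<longlonglongrightarrow> 0" using fib[OF t fin refl] by simp
    qed
  qed
  have conv: "(\<lambda>n. \<integral>\<^sup>+ t. Phi n t \<partial>?P) \<longlonglongrightarrow> (\<integral>\<^sup>+ t. 0 \<partial>?P)"
    by (rule nn_integral_dominated_convergence[OF Phim _ Psim _ PsiL lim])
       (auto intro: AE_I2 bound)
  have hgL: "(\<integral>\<^sup>+ x. ennreal ((norm (h n x - g x))^2) \<partial>torus_on I) \<le> (\<integral>\<^sup>+ x. ennreal ((norm (g x))^2) \<partial>torus_on I)" for n
    unfolding int_hg int_g by (intro nn_integral_mono) (use bound in auto)
  have Lpm: "Lp_mem 2 (torus_on I) (h n)" for n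
    unfolding Lp_mem_def npow2
  proof
    show "h n \<in> borel_measurable (torus_on I)" by (rule hm)
    have "(\<integral>\<^sup>+ x. ennreal ((norm (h n x))^2) \<partial>torus_on I)
        \<le> (\<integral>\<^sup>+ x. 2 * ennreal ((norm (h n x - g x))^2) + 2 * ennreal ((norm (g x))^2) \<partial>torus_on I)"
    proof (intro nn_integral_mono)
      fix x
      have "(norm (h n x))^2 \<le> 2 * (norm (h n x - g x))^2 + 2 * (norm (g x))^2"
        using sq_add_le[of "h n x - g x" "g x"] by simp
      then show "ennreal ((norm (h n x))^2) \<le> 2 * ennreal ((norm (h n x - g x))^2) + 2 * ennreal ((norm (g x))^2)"
      proof -
        let ?a = "(norm (h n x - g x))^2" and ?b = "(norm (g x))^2"
        have "ennreal ((norm (h n x))^2) \<le> ennreal (2 * ?a + 2 * ?b)" by (rule ennreal_leI) fact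
        also have "\<dots> = ennreal (2 * ?a) + ennreal (2 * ?b)" by (rule ennreal_plus) auto
        also have "\<dots> = 2 * ennreal ?a + 2 * ennreal ?b" by (simp add: ennreal_mult)
        finally show ?thesis .
      qed
    qed
    also have "\<dots> = 2 * (\<integral>\<^sup>+ x. ennreal ((norm (h n x - g x))^2) \<partial>torus_on I) + 2 * (\<integral>\<^sup>+ x. ennreal ((norm (g x))^2) \<partial>torus_on I)"
      using hm[of n] gm by (simp add: nn_integral_add nn_integral_cmult)
    also have "\<dots> < \<infinity>"
      using hgL[of n] gL by (simp add: npow2 ennreal_mult_less_top order.strict_trans1)
    finally show "(\<integral>\<^sup>+ x. ennreal ((norm (h n x))^2) \<partial>torus_on I) < \<infinity>" .
  qed
  have "Lp_conv 2 (torus_on I) h g"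
    unfolding Lp_conv_def npow2 int_hg using conv by simp
  then show ?thesis using Lpm by blast
qed



lemma merge_upd1:
  assumes "1 \<in> I"
  shows "(merge I K (x, y))(1 := s) = merge I K (x(1 := s), y)"
  using assms by (auto simp: merge_def fun_eq_iff)

theorem lemma7p1:
  fixes N :: nat and f :: "(nat \<Rightarrow> complex) \<Rightarrow> complex"
    and fs :: "nat \<Rightarrow> (nat \<Rightarrow> complex) \<Rightarrow> complex"
  assumes "N \<ge> 2"
    and "Lp_mem 2 (torus N) f"
    and "\<And>n t. fs n t = (\<Sum>k\<in>{-int n..int n}. (t 1) powi k * C1 k f t)"
  shows "rconv 2 N fs f"
proof -
  have fm: "f \<in> borel_measurable (torus_on {1..N})" and fL: "(\<integral>\<^sup>+ x. ennreal (norm (f x) powr 2) \<partial>torus_on {1..N}) < \<infinity>"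
    using assms(2) unfolding Lp_mem_def torus_def by auto
  have main: "(\<forall>n. Lp_mem 2 (torus_on {1..N}) (fs n)) \<and> Lp_conv 2 (torus_on {1..N}) fs f"
    by (rule gen[OF _ _ fm fL]) (use assms(1) assms(3) in auto)
  have hyp: "AE y in torus_on {l..N}.
        Lp_conv 2 (torus_on {1..<l})
          (\<lambda>n x. fs n (merge {1..<l} {l..N} (x, y)))
          (\<lambda>x. f (merge {1..<l} {l..N} (x, y)))" if l: "l \<in> {2..N}" for l
  proof -
    let ?I = "{1..<l}" and ?K = "{l..N}"
    have disj: "?K \<inter> ?I = {}" and un: "?K \<union> ?I = {1..N}" using l by auto
    have one: "1 \<in> ?I" using l by auto
    interpret FI: finite_product_sigma_finite "\<lambda>_::nat. CM" ?I by standard auto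
    have fm': "f \<in> borel_measurable (PiM (?K \<union> ?I) (\<lambda>_. CM))" using fm unfolding un torus_on_def .
    have fm2: "(\<lambda>x. ennreal ((norm (f x))^2)) \<in> borel_measurable (PiM (?K \<union> ?I) (\<lambda>_. CM))"
      using fm' by measurable
    let ?inner = "\<lambda>y. \<integral>\<^sup>+ x. ennreal ((norm (f (merge ?K ?I (y, x))))^2) \<partial>PiM ?I (\<lambda>_. CM)"
    have fold: "(\<integral>\<^sup>+ x. ennreal ((norm (f x))^2) \<partial>PiM (?K \<union> ?I) (\<lambda>_. CM)) = (\<integral>\<^sup>+ y. ?inner y \<partial>PiM ?K (\<lambda>_. CM))"
      by (rule PS.product_nn_integral_fold[OF disj _ _ fm2]) auto
    have innm: "?inner \<in> borel_measurable (PiM ?K (\<lambda>_. CM))"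
    proof -
      have "(\<lambda>z. ennreal ((norm (f (merge ?K ?I z)))^2)) \<in> borel_measurable (PiM ?K (\<lambda>_. CM) \<Otimes>\<^sub>M PiM ?I (\<lambda>_. CM))"
        using measurable_compose[OF measurable_merge fm2] by simp
      then show ?thesis by (intro FI.borel_measurable_nn_integral) (simp add: split_beta')
    qed
    have "(\<integral>\<^sup>+ y. ?inner y \<partial>PiM ?K (\<lambda>_. CM)) < \<infinity>"
      using fL fold un unfolding torus_on_def by (simp add: npow2)
    then have ae: "AE y in PiM ?K (\<lambda>_. CM). ?inner y \<noteq> \<infinity>"
      by (intro nn_integral_PInf_AE innm) auto
    show ?thesis unfolding torus_on_def
    proof (rule AE_mp[OF ae], intro AE_I2 impI)
      fix y assume y: "y \<in> space (PiM ?K (\<lambda>_. CM))" and fin: "?inner y \<noteq> \<infinity>"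
      let ?g = "\<lambda>x. f (merge ?I ?K (x, y))"
      have mg: "(\<lambda>x. merge ?I ?K (x, y)) \<in> measurable (PiM ?I (\<lambda>_. CM)) (PiM (?I \<union> ?K) (\<lambda>_. CM))"
        using measurable_compose[OF measurable_Pair2'[OF y] measurable_merge[of ?I ?K "\<lambda>_. CM"]] by simp
      have gm: "?g \<in> borel_measurable (torus_on ?I)"
        unfolding torus_on_def using measurable_compose[OF mg, of f] fm' un by (simp add: Un_commute)
      have gL: "(\<integral>\<^sup>+ x. ennreal (norm (?g x) powr 2) \<partial>torus_on ?I) < \<infinity>"
      proof -
        have "(\<integral>\<^sup>+ x. ennreal (norm (?g x) powr 2) \<partial>torus_on ?I) = ?inner y"
        proof -
          have mc: "merge ?K ?I (y, x) = merge ?I ?K (x, y)" for x by (rule merge_commute[OF disj])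
          show ?thesis unfolding torus_on_def npow2 mc ..
        qed
        then show ?thesis using fin by (simp add: top.not_eq_extremum)
      qed
      have heq: "fs n (merge ?I ?K (x, y)) = (\<Sum>k\<in>{-int n..int n}. (x 1) powi k * C1 k ?g x)" for n x
      proof -
        have a: "merge ?I ?K (x, y) 1 = x 1" using one by (simp add: merge_def)
        have b: "C1 k f (merge ?I ?K (x, y)) = C1 k ?g x" for k
          unfolding C1_def merge_upd1[OF one] ..
        show ?thesis unfolding assms(3) a b ..
      qed
      have "(\<forall>n. Lp_mem 2 (torus_on ?I) (\<lambda>x. fs n (merge ?I ?K (x, y)))) \<and>
            Lp_conv 2 (torus_on ?I) (\<lambda>n x. fs n (merge ?I ?K (x, y))) ?g"
      proof (rule gen[OF _ one gm gL])
        show "finite ?I" by simp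
        fix n t show "fs n (merge ?I ?K (t, y)) = (\<Sum>k\<in>{-int n..int n}. (t 1) powi k * C1 k ?g t)"
          by (rule heq)
      qed
      then show "Lp_conv 2 (PiM ?I (\<lambda>_. CM)) (\<lambda>n x. fs n (merge ?I ?K (x, y))) ?g"
        unfolding torus_on_def by blast
    qed
  qed
  show ?thesis
    unfolding rconv_def torus_def using main assms(2) hyp unfolding torus_def by blast
qed


end
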